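(* In the setting described in the context (no inter-cell interference), suppose the target rates $R_k,R_{\tilde k}>0$ satisfy $$R_{\tilde k}<\log_2\left(1+\frac{\beta_{\tilde k}^2|\mu_k|^2}{\sum_{i=1}^K|\boldsymbol\psi_i^{\mathrm H}\boldsymbol\nu_1|^2+\beta_k^2\beta_{\tilde k}^2|\mu_k|^2+\frac{\sigma_k^2}{P\ell(d_k)}}\right),\qquad R_k<\log_2\left(1+\frac{|\mu_k|^2\beta_k^2}{\sum_{i=1}^K|\boldsymbol\psi_i^{\mathrm H}\boldsymbol\nu_2|^2+\frac{\sigma_k^2}{P\ell(d_k)}}\right).$$ Then the near-user outage probability $$p_k=\Pr\left(\log_2(1+\mathrm{SINR}_{k\to\tilde k})<R_{\tilde k}\ \text{ or }\ \log_2(1+\mathrm{SINR}_k)<R_k\right)$$ tends to $0$ as $\sigma_h^2\to0$ (equivalently, as the channel K factor $\mathcal K=\|\hat{\mathbf H}\|_F^2/(\sigma_h^2\mathrm{Tr}(\mathbf R_t)\mathrm{Tr}(\mathbf R_r))\to\infty$), with all other quantities held fixed.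
   Context: Let $K\le\min\{M,N\}$ be positive integers and $k\in\{1,\dots,K\}$. Fix $\hat{\mathbf H}\in\mathbb C^{N\times M}$, Hermitian positive definite $\mathbf R_r\in\mathbb C^{N\times N}$, $\mathbf R_t\in\mathbb C^{M\times M}$, and $\sigma_h^2>0$; the estimation error is $\mathbf E=\mathbf R_r^{1/2}\mathbf E_w\mathbf R_t^{1/2}$ with $\mathrm{vec}(\mathbf E_w)\sim\mathcal{CN}(\mathbf 0,\sigma_h^2\mathbf I_{NM})$. Fix $\mathbf V=(\mathbf v_1,\dots,\mathbf v_K)\in\mathbb C^{M\times K}$ with $\|\mathbf v_i\|=1$, a nonzero receive filter $\mathbf u\in\mathbb C^N$ of the near user $k$, coefficients $\beta_k,\beta_{\tilde k}\ge0$ with $\beta_k^2+\beta_{\tilde k}^2=1$, $P>0$, $d_k>0$, $\ell(d)=d^{-\alpha}$ with $\alpha>2$, $\sigma^2\ge0$, and $\sigma_k^2=\sigma^2\|\mathbf u\|^2$. With no inter-cell interference, the SINR for decoding the far user's message at user $k$ (SIC step) and for decoding its own message are $$\mathrm{SINR}_{k\to\tilde k}=\frac{P\ell(d_k)|\mathbf u^{\mathrm H}\hat{\mathbf H}\mathbf v_k|^2\beta_{\tilde k}^2}{P\ell(d_k)\left(|\mathbf u^{\mathrm H}\mathbf E\mathbf v_k|^2\beta_{\tilde k}^2+|\mathbf u^{\mathrm H}(\hat{\mathbf H}+\mathbf E)\mathbf v_k|^2\beta_k^2+\sum_{i\ne k}|\mathbf u^{\mathrm H}(\hat{\mathbf H}+\mathbf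 E)\mathbf v_i|^2\right)+\sigma_k^2},$$ $$\mathrm{SINR}_k=\frac{P\ell(d_k)|\mathbf u^{\mathrm H}\hat{\mathbf H}\mathbf v_k|^2\beta_k^2}{P\ell(d_k)\left(|\mathbf u^{\mathrm H}\mathbf E\mathbf v_k|^2+\sum_{i\ne k}|\mathbf u^{\mathrm H}(\hat{\mathbf H}+\mathbf E)\mathbf v_i|^2\right)+\sigma_k^2}.$$ Define $\mu_i=\mathbf u^{\mathrm H}\hat{\mathbf H}\mathbf v_i$, $\boldsymbol\nu_1=(\mu_1,\dots,\mu_{k-1},\beta_k^2\mu_k,\mu_{k+1},\dots,\mu_K)^{\mathrm T}$, $\boldsymbol\nu_2=(\mu_1,\dots,\mu_{k-1},0,\mu_{k+1},\dots,\mu_K)^{\mathrm T}$, and $\boldsymbol\Sigma=\sigma_h^2(\mathbf u^{\mathrm H}\mathbf R_r\mathbf u)(\mathbf V^{\mathrm H}\mathbf R_t\mathbf V)^{\mathrm T}$ (the covariance of $(\mathbf u^{\mathrm H}\mathbf E\mathbf V)^{\mathrm T}$) with eigendecomposition $\boldsymbol\Sigma=\boldsymbol\Psi\boldsymbol\Delta\boldsymbol\Psi^{\mathrm H}$, $\boldsymbol\Psi=(\boldsymbol\psi_1,\dots,\boldsymbol\psi_K)$ unitary. *)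

theory Defs
  imports "HOL-Analysis.Analysis"
begin

text \<open>Complex vectors and matrices are HOL-Analysis finite Cartesian types:
  a vector in C^n is complex^'n, an n x m matrix is complex^'m^'n (row index 'n).\<close>

definition cdot :: "complex^'n \<Rightarrow> complex^'n \<Rightarrow> complex" where
  "cdot x y = (\<Sum>i\<in>UNIV. cnj (x$i) * y$i)"

definition ctrans :: "complex^'m^'n \<Rightarrow> complex^'n^'m" where
  "ctrans A = (\<chi> i j. cnj (A$j$i))"

definition hermitian :: "complex^'n^'n \<Rightarrow> bool" where
  "hermitian A \<longleftrightarrow> ctrans A = A"

definition pos_def :: "complex^'n^'n \<Rightarrow> bool" where
  "pos_def A \<longleftrightarrow> hermitian A \<and> (\<forall>x. x \<noteq> 0 \<longrightarrow> Re (cdot x (A *v x)) > 0)"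

definition pos_semidef :: "complex^'n^'n \<Rightarrow> bool" where
  "pos_semidef A \<longleftrightarrow> hermitian A \<and> (\<forall>x. Re (cdot x (A *v x)) \<ge> 0)"

definition unitary :: "complex^'n^'n \<Rightarrow> bool" where
  "unitary U \<longleftrightarrow> U ** ctrans U = mat 1 \<and> ctrans U ** U = mat 1"

definition diag_mat :: "(('n::finite) \<Rightarrow> real) \<Rightarrow> complex^'n^'n" where
  "diag_mat d = (\<chi> i j. if i = j then complex_of_real (d i) else 0)"

text \<open>Distribution of E_w: vec(E_w) ~ CN(0, s I), i.e. i.i.d. circularly-symmetric
  complex Gaussian entries with density (1/(pi s)) exp(-|z|^2/s) w.r.t. Lebesgue
  measure on C (= R^2).\<close>
definition cgauss_mat :: "real \<Rightarrow> (complex^'m^'n) measure" where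
  "cgauss_mat s = density lborel
     (\<lambda>X. ennreal (\<Prod>i\<in>UNIV. \<Prod>j\<in>UNIV. exp (- (cmod (X$i$j))\<^sup>2 / s) / (pi * s)))"

definition pathloss :: "real \<Rightarrow> real \<Rightarrow> real" where
  "pathloss \<alpha> d = d powr (- \<alpha>)"

end

theory Submission
  imports Defs "HOL-Probability.Probability"
begin

lemma norm_sq_entries:
  fixes X :: "complex^'m^'n"
  shows "(norm X)\<^sup>2 = (\<Sum>i\<in>UNIV. \<Sum>j\<in>UNIV. (cmod (X$i$j))\<^sup>2)"
proof -
  have "(norm X)\<^sup>2 = (\<Sum>i\<in>UNIV. (norm (X$i))\<^sup>2)"
    by (simp add: norm_vec_def L2_set_def sum_nonneg)
  also have "\<dots> = (\<Sum>i\<in>UNIV. \<Sum>j\<in>UNIV. (cmod (X$i$j))\<^sup>2)"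
    by (simp add: norm_vec_def L2_set_def sum_nonneg)
  finally show ?thesis .
qed

lemma dens_eq:
  fixes X :: "complex^'m^'n"
  shows "(\<Prod>i\<in>UNIV. \<Prod>j\<in>UNIV. exp (- (cmod (X$i$j))\<^sup>2 / s) / (pi * s))
     = exp (- (norm X)\<^sup>2 / s) / (pi * s) ^ (CARD('n) * CARD('m))"
proof -
  have "(\<Prod>i\<in>UNIV. \<Prod>j\<in>UNIV. exp (- (cmod (X$i$j))\<^sup>2 / s) / (pi * s))
     = (\<Prod>i\<in>UNIV. \<Prod>j\<in>UNIV. exp (- (cmod (X$i$j))\<^sup>2 / s)) / (\<Prod>i\<in>(UNIV::'n set). \<Prod>j\<in>(UNIV::'m set). pi * s)"
    by (simp add: prod_dividef)
  also have "(\<Prod>i\<in>UNIV. \<Prod>j\<in>UNIV. exp (- (cmod (X$i$j))\<^sup>2 / s)) = exp (- (norm X)\<^sup>2 / s)"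
  proof -
    have "(\<Prod>i\<in>UNIV. \<Prod>j\<in>UNIV. exp (- (cmod (X$i$j))\<^sup>2 / s)) = exp (\<Sum>i\<in>UNIV. \<Sum>j\<in>UNIV. - (cmod (X$i$j))\<^sup>2 / s)"
      by (simp add: exp_sum)
    also have "(\<Sum>i\<in>UNIV. \<Sum>j\<in>UNIV. - (cmod (X$i$j))\<^sup>2 / s) = - (norm X)\<^sup>2 / s"
      by (simp add: norm_sq_entries sum_divide_distrib sum_negf)
    finally show ?thesis .
  qed
  also have "(\<Prod>i\<in>(UNIV::'n set). \<Prod>j\<in>(UNIV::'m set). pi * s) = (pi * s) ^ (CARD('n) * CARD('m))"
    by (simp add: power_mult[symmetric] mult.commute)
  finally show ?thesis .
qed

lemma gauss1:
  assumes "c > 0"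
  shows "(\<integral>\<^sup>+t. ennreal (exp (- t\<^sup>2 / c)) \<partial>lborel) = ennreal (sqrt (pi * c))"
proof -
  define \<sigma> where "\<sigma> = sqrt (c/2)"
  have s: "\<sigma> > 0" "\<sigma>\<^sup>2 = c/2" using assms by (auto simp: \<sigma>_def)
  have eq: "exp (- t\<^sup>2 / c) = sqrt (pi * c) * normal_density 0 \<sigma> t" for t
    using s assms by (simp add: normal_density_def real_sqrt_mult field_simps)
  have "(\<integral>\<^sup>+t. ennreal (normal_density 0 \<sigma> t) \<partial>lborel) = 1"
    apply (subst nn_integral_eq_integral)
    using integrable_normal_density[of \<sigma> 0] integral_normal_density[of \<sigma> 0] s(1) by auto
  moreover have "(\<integral>\<^sup>+t. ennreal (exp (- t\<^sup>2 / c)) \<partial>lborel) = (\<integral>\<^sup>+t. ennreal (sqrt (pi*c)) * ennreal (normal_density 0 \<sigma> t) \<partial>lborel)"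
    using assms by (intro nn_integral_cong, subst eq) (simp add: ennreal_mult)
  moreover have "\<dots> = ennreal (sqrt (pi*c)) * (\<integral>\<^sup>+t. ennreal (normal_density 0 \<sigma> t) \<partial>lborel)"
    by (rule nn_integral_cmult) measurable
  ultimately show ?thesis by simp
qed

lemma gaussN:
  assumes "c > 0"
  shows "(\<integral>\<^sup>+X. ennreal (exp (- (norm (X::complex^'m^'n))\<^sup>2 / c)) \<partial>lborel)
     = ennreal ((pi * c) ^ (CARD('n) * CARD('m)))"
proof -
  have "exp (- (norm X)\<^sup>2 / c) = (\<Prod>b\<in>Basis. exp (- (X \<bullet> b)\<^sup>2 / c))" for X :: "complex^'m^'n"
  proof -
    have "(norm X)\<^sup>2 = (\<Sum>b\<in>Basis. (X \<bullet> b)\<^sup>2)"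
      by (subst power2_norm_eq_inner, subst euclidean_inner, simp add: power2_eq_square)
    moreover have "exp (\<Sum>b\<in>Basis. - (X \<bullet> b)\<^sup>2 / c) = (\<Prod>b\<in>Basis. exp (- (X \<bullet> b)\<^sup>2 / c))"
      by (simp add: exp_sum)
    ultimately show ?thesis
      by (simp add: sum_divide_distrib sum_negf)
  qed
  then have "(\<integral>\<^sup>+X. ennreal (exp (- (norm (X::complex^'m^'n))\<^sup>2 / c)) \<partial>lborel)
       = (\<integral>\<^sup>+X. (\<Prod>b\<in>(Basis::(complex^'m^'n) set). ennreal (exp (- (X \<bullet> b)\<^sup>2 / c))) \<partial>lborel)"
    by (simp add: prod_ennreal)
  also have "\<dots> = (\<Prod>b\<in>(Basis::(complex^'m^'n) set). (\<integral>\<^sup>+t. ennreal (exp (- t\<^sup>2 / c)) \<partial>lborel))"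
    by (rule nn_integral_lborel_prod) auto
  also have "\<dots> = (\<Prod>b\<in>(Basis::(complex^'m^'n) set). ennreal (sqrt (pi * c)))"
    by (simp only: gauss1[OF assms])
  also have "\<dots> = ennreal (sqrt (pi * c) ^ DIM(complex^'m^'n))"
    using assms by (simp add: ennreal_power)
  also have "sqrt (pi * c) ^ DIM(complex^'m^'n) = (pi * c) ^ (CARD('n) * CARD('m))"
  proof -
    have "DIM(complex^'m^'n) = 2 * (CARD('n) * CARD('m))" by simp
    moreover have "sqrt (pi*c) ^ (2 * (CARD('n) * CARD('m))) = (pi*c)^(CARD('n) * CARD('m))"
      using assms by (simp add: power_mult)
    ultimately show ?thesis by (simp add: mult.commute mult.left_commute)
  qed
  finally show ?thesis .
qed


lemma gauss_tail:
  fixes \<delta> s :: real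
  assumes d: "\<delta> > 0" and s: "s > 0"
  shows "emeasure (cgauss_mat s :: (complex^'m^'n) measure) {X. \<delta> \<le> norm X}
     \<le> ennreal (2 ^ (CARD('n) * CARD('m)) * exp (- \<delta>\<^sup>2 / (2 * s)))"
proof -
  let ?D = "CARD('n) * CARD('m)"
  have cg: "(cgauss_mat s :: (complex^'m^'n) measure) =
      density lborel (\<lambda>X. ennreal (exp (- (norm X)\<^sup>2 / s) / (pi * s) ^ ?D))"
    unfolding cgauss_mat_def dens_eq ..
  have B: "{X::complex^'m^'n. \<delta> \<le> norm X} \<in> sets lborel"
    by measurable
  have "emeasure (cgauss_mat s :: (complex^'m^'n) measure) {X. \<delta> \<le> norm X}
     = (\<integral>\<^sup>+X. ennreal (exp (- (norm X)\<^sup>2 / s) / (pi * s) ^ ?D) * indicator {X::complex^'m^'n. \<delta> \<le> norm X} X \<partial>lborel)"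
    unfolding cg by (rule emeasure_density) (use B in auto)
  also have "\<dots> \<le> (\<integral>\<^sup>+X. ennreal (exp (- \<delta>\<^sup>2 / (2 * s)) / (pi * s) ^ ?D) * ennreal (exp (- (norm (X::complex^'m^'n))\<^sup>2 / (2 * s))) \<partial>lborel)"
  proof (rule nn_integral_mono)
    fix X :: "complex^'m^'n"
    show "ennreal (exp (- (norm X)\<^sup>2 / s) / (pi * s) ^ ?D) * indicator {X. \<delta> \<le> norm X} X
        \<le> ennreal (exp (- \<delta>\<^sup>2 / (2 * s)) / (pi * s) ^ ?D) * ennreal (exp (- (norm X)\<^sup>2 / (2 * s)))"
    proof (cases "\<delta> \<le> norm X")
      case True
      have "\<delta>\<^sup>2 \<le> (norm X)\<^sup>2" using True d by (simp add: power_mono)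
      then have "- (norm X)\<^sup>2 / s \<le> - \<delta>\<^sup>2 / (2 * s) + - (norm X)\<^sup>2 / (2 * s)"
        using s by (simp add: field_simps)
      then have "exp (- (norm X)\<^sup>2 / s) \<le> exp (- \<delta>\<^sup>2 / (2 * s)) * exp (- (norm X)\<^sup>2 / (2 * s))"
        by (simp add: exp_add[symmetric])
      then have "exp (- (norm X)\<^sup>2 / s) / (pi * s) ^ ?D \<le> exp (- \<delta>\<^sup>2 / (2 * s)) / (pi * s) ^ ?D * exp (- (norm X)\<^sup>2 / (2 * s))"
        using s by (simp add: divide_right_mono)
      then show ?thesis using True s
        by (simp add: ennreal_mult[symmetric] ennreal_leI)
    qed auto
  qed
  also have "\<dots> = ennreal (exp (- \<delta>\<^sup>2 / (2 * s)) / (pi * s) ^ ?D) * ennreal ((pi * (2 * s)) ^ ?D)"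
  proof -
    have g: "(\<integral>\<^sup>+X. ennreal (exp (- (norm (X::complex^'m^'n))\<^sup>2 / (2 * s))) \<partial>lborel) = ennreal ((pi * (2 * s)) ^ ?D)"
      by (rule gaussN) (use s in simp)
    have m: "(\<lambda>X::complex^'m^'n. ennreal (exp (- (norm X)\<^sup>2 / (2 * s)))) \<in> borel_measurable lborel"
      by measurable
    show ?thesis
      by (subst nn_integral_cmult[OF m]) (simp only: g)
  qed
  also have "\<dots> = ennreal (2 ^ ?D * exp (- \<delta>\<^sup>2 / (2 * s)))"
    using s by (simp add: ennreal_mult[symmetric] power_mult_distrib field_simps)
  finally show ?thesis .
qed



lemma cdot_add: "cdot u (x + y) = cdot u x + cdot u y"
  by (simp add: cdot_def distrib_left sum.distrib)

lemma cdot_zero: "cdot u 0 = 0"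
  by (simp add: cdot_def)

lemma A_cont:
  fixes Sr :: "complex^'n^'n" and St :: "complex^'m^'m" and c :: "complex^'m" and u :: "complex^'n"
  shows "isCont (\<lambda>Ew::complex^'m^'n. cdot u ((Sr ** Ew ** St) *v c)) x"
  unfolding cdot_def matrix_vector_mult_def matrix_matrix_mult_def
  apply (simp only: vec_lambda_beta)
  apply (intro continuous_intros isCont_vec_nth continuous_ident)
  done

lemma unitary_sum:
  fixes \<Psi> :: "complex^'k^'k"
  assumes "unitary \<Psi>"
  shows "(\<Sum>i\<in>UNIV. (cmod (cdot (column i \<Psi>) v))\<^sup>2) = (\<Sum>j\<in>UNIV. (cmod (v$j))\<^sup>2)"
proof -
  have orth: "(\<Sum>i\<in>UNIV. \<Psi>$j$i * cnj (\<Psi>$l$i)) = (if j = l then 1 else 0)" for j l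
  proof -
    have "(\<Psi> ** ctrans \<Psi>)$j$l = (mat 1 :: complex^'k^'k)$j$l"
      using assms unfolding unitary_def by simp
    then show ?thesis by (simp add: matrix_matrix_mult_def ctrans_def mat_def)
  qed
  define w where "w i = cdot (column i \<Psi>) v" for i
  have w: "w i = (\<Sum>j\<in>UNIV. cnj (\<Psi>$j$i) * v$j)" for i
    by (simp add: w_def cdot_def column_def)
  have "complex_of_real (\<Sum>i\<in>UNIV. (cmod (w i))\<^sup>2) = (\<Sum>i\<in>UNIV. w i * cnj (w i))"
    by (simp only: of_real_sum complex_norm_square)
  also have "\<dots> = (\<Sum>i\<in>UNIV. \<Sum>j\<in>UNIV. \<Sum>l\<in>UNIV. (\<Psi>$l$i * cnj (\<Psi>$j$i)) * (v$j * cnj (v$l)))"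
    unfolding w cnj_sum complex_cnj_mult complex_cnj_cnj sum_product by (simp add: mult_ac)
  also have "\<dots> = (\<Sum>j\<in>UNIV. \<Sum>i\<in>UNIV. \<Sum>l\<in>UNIV. (\<Psi>$l$i * cnj (\<Psi>$j$i)) * (v$j * cnj (v$l)))"
    by (rule sum.swap)
  also have "\<dots> = (\<Sum>j\<in>UNIV. \<Sum>l\<in>UNIV. \<Sum>i\<in>UNIV. (\<Psi>$l$i * cnj (\<Psi>$j$i)) * (v$j * cnj (v$l)))"
    by (rule sum.cong[OF refl], rule sum.swap)
  also have "\<dots> = (\<Sum>j\<in>UNIV. \<Sum>l\<in>UNIV. (\<Sum>i\<in>UNIV. \<Psi>$l$i * cnj (\<Psi>$j$i)) * (v$j * cnj (v$l)))"
    by (simp only: sum_distrib_right)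
  also have "\<dots> = (\<Sum>j\<in>UNIV. v$j * cnj (v$j))"
  proof -
    have ifm: "(if P then 1 else 0) * y = (if P then y else (0::complex))" for P y by simp
    show ?thesis by (simp only: orth ifm sum.delta finite UNIV_I if_True)
  qed
  also have "\<dots> = complex_of_real (\<Sum>j\<in>UNIV. (cmod (v$j))\<^sup>2)"
    by (simp only: of_real_sum complex_norm_square)
  finally show ?thesis unfolding w_def by (simp only: of_real_eq_iff)
qed

lemma exp_lim:
  fixes d :: real and N :: nat
  assumes d: "d > 0"
  shows "((\<lambda>s. 2 ^ N * exp (- d\<^sup>2 / (2 * s))) \<longlongrightarrow> 0) (at_right (0::real))"
proof -
  have 1: "LIM s at_right 0. (\<lambda>_. -(d\<^sup>2/2)) s * inverse s :> at_bot"
    by (rule filterlim_tendsto_neg_mult_at_bot[OF tendsto_const _ filterlim_inverse_at_top_right]) (use d in simp)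
  have 2: "((\<lambda>s. exp (-(d\<^sup>2/2) * inverse s)) \<longlongrightarrow> 0) (at_right (0::real))"
    by (rule filterlim_compose[OF exp_at_bot 1])
  have 3: "((\<lambda>s. 2 ^ N * exp (-(d\<^sup>2/2) * inverse s)) \<longlongrightarrow> 0) (at_right (0::real))"
    using 2 by (rule tendsto_mult_right_zero)
  have h: "- d\<^sup>2 / (2 * s) = -(d\<^sup>2/2) * inverse s" for s :: real
    by (simp only: divide_inverse[symmetric] minus_divide_left divide_divide_eq_left)
  show ?thesis unfolding h by (rule 3)
qed



theorem theorem6:
  fixes Hh :: "complex^'m^'n"          \<comment> \<open>\<hat>H, N x M\<close>
    and Rr Sr :: "complex^'n^'n"       \<comment> \<open>R_r and its Hermitian PSD square root\<close>
    and Rt St :: "complex^'m^'m"       \<comment> \<open>R_t and its Hermitian PSD square root\<close>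
    and V :: "complex^'k^'m"
    and u :: "complex^'n"
    and k :: 'k
    and \<beta>k \<beta>t P dk \<alpha> \<sigma>2 Rk Rt_rate :: real
    and \<Psi> :: "complex^'k^'k" and \<Delta> :: "'k \<Rightarrow> real"
  assumes KM: "CARD('k) \<le> CARD('m)" and KN: "CARD('k) \<le> CARD('n)"
    and Rr_pd: "pos_def Rr" and Rt_pd: "pos_def Rt"
    and Sr: "pos_semidef Sr" "Sr ** Sr = Rr"
    and St: "pos_semidef St" "St ** St = Rt"
    and V_unit: "\<forall>i. norm (column i V) = 1"
    and u_nz: "u \<noteq> 0"
    and beta: "\<beta>k \<ge> 0" "\<beta>t \<ge> 0" "\<beta>k\<^sup>2 + \<beta>t\<^sup>2 = 1"
    and P: "P > 0" and dk: "dk > 0" and alpha: "\<alpha> > 2" and sig: "\<sigma>2 \<ge> 0"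
    and rates: "Rk > 0" "Rt_rate > 0"
    \<comment> \<open>eigendecomposition of \<Sigma>/\<sigma>_h^2 = (u^H R_r u)(V^H R_t V)^T (eigenvectors of \<Sigma> do not depend on \<sigma>_h^2)\<close>
    and Psi: "unitary \<Psi>"
    and eig: "(\<chi> i j. cdot u (Rr *v u) * (ctrans V ** Rt ** V)$j$i) = \<Psi> ** diag_mat \<Delta> ** ctrans \<Psi>"
    and cond_t: "let \<mu> = (\<lambda>i. cdot u (Hh *v column i V));
                    \<nu>1 = (\<chi> i. if i = k then complex_of_real (\<beta>k\<^sup>2) * \<mu> i else \<mu> i);
                    \<sigma>k2 = \<sigma>2 * (norm u)\<^sup>2
                 in Rt_rate < log 2 (1 + \<beta>t\<^sup>2 * (cmod (\<mu> k))\<^sup>2 /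
                      ((\<Sum>i\<in>UNIV. (cmod (cdot (column i \<Psi>) \<nu>1))\<^sup>2)
                        + \<beta>k\<^sup>2 * \<beta>t\<^sup>2 * (cmod (\<mu> k))\<^sup>2 + \<sigma>k2 / (P * pathloss \<alpha> dk)))"
    and cond_k: "let \<mu> = (\<lambda>i. cdot u (Hh *v column i V));
                    \<nu>2 = (\<chi> i. if i = k then 0 else \<mu> i);
                    \<sigma>k2 = \<sigma>2 * (norm u)\<^sup>2
                 in Rk < log 2 (1 + (cmod (\<mu> k))\<^sup>2 * \<beta>k\<^sup>2 /
                      ((\<Sum>i\<in>UNIV. (cmod (cdot (column i \<Psi>) \<nu>2))\<^sup>2) + \<sigma>k2 / (P * pathloss \<alpha> dk)))"
  shows "(((\<lambda>sh. measure (cgauss_mat sh :: (complex^'m^'n) measure)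
            {Ew. let E = Sr ** Ew ** St;
                     Pl = P * pathloss \<alpha> dk;
                     \<sigma>k2 = \<sigma>2 * (norm u)\<^sup>2;
                     SINRkt = Pl * (cmod (cdot u (Hh *v column k V)))\<^sup>2 * \<beta>t\<^sup>2 /
                       (Pl * ((cmod (cdot u (E *v column k V)))\<^sup>2 * \<beta>t\<^sup>2
                              + (cmod (cdot u ((Hh + E) *v column k V)))\<^sup>2 * \<beta>k\<^sup>2
                              + (\<Sum>i\<in>UNIV - {k}. (cmod (cdot u ((Hh + E) *v column i V)))\<^sup>2))
                        + \<sigma>k2);
                     SINRk = Pl * (cmod (cdot u (Hh *v column k V)))\<^sup>2 * \<beta>k\<^sup>2 /
                       (Pl * ((cmod (cdot u (E *v column k V)))\<^sup>2
                              + (\<Sum>i\<in>UNIV - {k}. (cmod (cdot u ((Hh + E) *v column i V)))\<^sup>2))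
                        + \<sigma>k2)
                 in log 2 (1 + SINRkt) < Rt_rate \<or> log 2 (1 + SINRk) < Rk}))
         \<longlongrightarrow> 0) (at_right 0)"
  proof -
  define \<mu> where "\<mu> i = cdot u (Hh *v column i V)" for i
  define A where "A i Ew = cdot u ((Sr ** Ew ** St) *v column i V)" for i and Ew :: "complex^'m^'n"
  define Pl where "Pl = P * pathloss \<alpha> dk"
  define sk where "sk = \<sigma>2 * (norm u)\<^sup>2"
  have Pl: "Pl > 0" using P dk by (simp add: Pl_def pathloss_def)
  have sk: "sk \<ge> 0" using sig by (simp add: sk_def)
  define F1 where "F1 Ew = log 2 (1 + Pl * (cmod (\<mu> k))\<^sup>2 * \<beta>t\<^sup>2 /
      (Pl * ((cmod (A k Ew))\<^sup>2 * \<beta>t\<^sup>2 + (cmod (\<mu> k + A k Ew))\<^sup>2 * \<beta>k\<^sup>2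
          + (\<Sum>i\<in>UNIV - {k}. (cmod (\<mu> i + A i Ew))\<^sup>2)) + sk))" for Ew
  define F2 where "F2 Ew = log 2 (1 + Pl * (cmod (\<mu> k))\<^sup>2 * \<beta>k\<^sup>2 /
      (Pl * ((cmod (A k Ew))\<^sup>2 + (\<Sum>i\<in>UNIV - {k}. (cmod (\<mu> i + A i Ew))\<^sup>2)) + sk))" for Ew
  define S where "S = {Ew::complex^'m^'n. let E = Sr ** Ew ** St;
                     Pl = P * pathloss \<alpha> dk;
                     \<sigma>k2 = \<sigma>2 * (norm u)\<^sup>2;
                     SINRkt = Pl * (cmod (cdot u (Hh *v column k V)))\<^sup>2 * \<beta>t\<^sup>2 /
                       (Pl * ((cmod (cdot u (E *v column k V)))\<^sup>2 * \<beta>t\<^sup>2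
                              + (cmod (cdot u ((Hh + E) *v column k V)))\<^sup>2 * \<beta>k\<^sup>2
                              + (\<Sum>i\<in>UNIV - {k}. (cmod (cdot u ((Hh + E) *v column i V)))\<^sup>2))
                        + \<sigma>k2);
                     SINRk = Pl * (cmod (cdot u (Hh *v column k V)))\<^sup>2 * \<beta>k\<^sup>2 /
                       (Pl * ((cmod (cdot u (E *v column k V)))\<^sup>2
                              + (\<Sum>i\<in>UNIV - {k}. (cmod (cdot u ((Hh + E) *v column i V)))\<^sup>2))
                        + \<sigma>k2)
                 in log 2 (1 + SINRkt) < Rt_rate \<or> log 2 (1 + SINRk) < Rk}"
  have S_eq: "S = {Ew. F1 Ew < Rt_rate \<or> F2 Ew < Rk}"
    unfolding S_def F1_def F2_def Let_def A_def \<mu>_def Pl_def sk_def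
    by (simp only: matrix_vector_mult_add_rdistrib cdot_add)
  have A0: "A i 0 = 0" for i by (simp add: A_def cdot_zero)
  have Acont: "(A i \<longlongrightarrow> A i 0) (at 0)" for i
    using A_cont[where u=u and Sr=Sr and St=St and c="column i V" and x=0] unfolding A_def isCont_def .
  define m where "m = (cmod (\<mu> k))\<^sup>2"
  define S1 where "S1 = (\<Sum>i\<in>UNIV - {k}. (cmod (\<mu> i))\<^sup>2)"
  have m0: "m \<ge> 0" "S1 \<ge> 0" by (auto simp: m_def S1_def sum_nonneg)
  have F10: "F1 0 = log 2 (1 + Pl * m * \<beta>t\<^sup>2 / (Pl * (m * \<beta>k\<^sup>2 + S1) + sk))"
    by (simp add: F1_def A0 m_def S1_def)
  have F20: "F2 0 = log 2 (1 + Pl * m * \<beta>k\<^sup>2 / (Pl * S1 + sk))"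
    by (simp add: F2_def A0 m_def S1_def)
  have sum_split: "(\<Sum>j\<in>UNIV. (cmod (x$j))\<^sup>2) = (cmod (x$k))\<^sup>2 + (\<Sum>j\<in>UNIV-{k}. (cmod (x$j))\<^sup>2)" for x :: "complex^'k"
    by (simp add: sum.remove[of UNIV k])
  define \<nu>1 where "\<nu>1 = (\<chi> i. if i = k then complex_of_real (\<beta>k\<^sup>2) * \<mu> i else \<mu> i)"
  define \<nu>2 where "\<nu>2 = ((\<chi> i. if i = k then 0 else \<mu> i) :: complex^'k)"
  have n1: "(\<Sum>i\<in>UNIV. (cmod (cdot (column i \<Psi>) \<nu>1))\<^sup>2) = \<beta>k\<^sup>2 * \<beta>k\<^sup>2 * m + S1"
  proof -
    have a: "(cmod (\<nu>1$k))\<^sup>2 = \<beta>k\<^sup>2 * \<beta>k\<^sup>2 * m"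
      by (simp only: \<nu>1_def vec_lambda_beta simp_thms if_True m_def norm_mult norm_of_real abs_of_nonneg[OF zero_le_power2] power_mult_distrib power2_eq_square[of "\<beta>k\<^sup>2"])
    have b: "(\<Sum>j\<in>UNIV-{k}. (cmod (\<nu>1$j))\<^sup>2) = S1"
      unfolding S1_def by (rule sum.cong) (auto simp: \<nu>1_def)
    show ?thesis unfolding unitary_sum[OF Psi] sum_split a b ..
  qed
  have n2: "(\<Sum>i\<in>UNIV. (cmod (cdot (column i \<Psi>) \<nu>2))\<^sup>2) = S1"
    unfolding unitary_sum[OF Psi] sum_split
    by (simp add: \<nu>2_def S1_def)
  have ct: "Rt_rate < log 2 (1 + \<beta>t\<^sup>2 * m / (\<beta>k\<^sup>2 * \<beta>k\<^sup>2 * m + S1 + \<beta>k\<^sup>2 * \<beta>t\<^sup>2 * m + sk / Pl))"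
    using cond_t unfolding Let_def n1[unfolded \<nu>1_def \<mu>_def] m_def Pl_def sk_def \<mu>_def by simp
  have ck: "Rk < log 2 (1 + m * \<beta>k\<^sup>2 / (S1 + sk / Pl))"
    using cond_k unfolding Let_def n2[unfolded \<nu>2_def \<mu>_def] m_def Pl_def sk_def \<mu>_def by simp
  have e1: "\<beta>t\<^sup>2 * m / (\<beta>k\<^sup>2 * \<beta>k\<^sup>2 * m + S1 + \<beta>k\<^sup>2 * \<beta>t\<^sup>2 * m + sk / Pl)
      = Pl * m * \<beta>t\<^sup>2 / (Pl * (m * \<beta>k\<^sup>2 + S1) + sk)"
  proof -
    have "\<beta>k\<^sup>2 * \<beta>k\<^sup>2 * m + S1 + \<beta>k\<^sup>2 * \<beta>t\<^sup>2 * m + sk / Pl = (Pl * (m * \<beta>k\<^sup>2 + S1) + sk) / Pl"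
    proof -
      have "\<beta>k\<^sup>2 * \<beta>k\<^sup>2 * m + \<beta>k\<^sup>2 * \<beta>t\<^sup>2 * m = \<beta>k\<^sup>2 * m * (\<beta>k\<^sup>2 + \<beta>t\<^sup>2)"
        by (simp only: algebra_simps)
      also have "\<dots> = m * \<beta>k\<^sup>2" using beta(3) by simp
      finally have h: "\<beta>k\<^sup>2 * \<beta>k\<^sup>2 * m + \<beta>k\<^sup>2 * \<beta>t\<^sup>2 * m = m * \<beta>k\<^sup>2" .
      have "(Pl * (m * \<beta>k\<^sup>2 + S1) + sk) / Pl = m * \<beta>k\<^sup>2 + S1 + sk / Pl"
        using Pl by (simp add: field_simps)
      then show ?thesis using h by linarith
    qed
    then show ?thesis using Pl by (simp add: divide_divide_eq_right mult_ac)
  qed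
  have e2: "m * \<beta>k\<^sup>2 / (S1 + sk / Pl) = Pl * m * \<beta>k\<^sup>2 / (Pl * S1 + sk)"
  proof -
    have "S1 + sk / Pl = (Pl * S1 + sk) / Pl" using Pl by (simp add: field_simps)
    then show ?thesis using Pl by simp
  qed
  have F10g: "F1 0 > Rt_rate" using ct e1 F10 by simp
  have F20g: "F2 0 > Rk" using ck e2 F20 by simp
  have D1: "Pl * (m * \<beta>k\<^sup>2 + S1) + sk \<noteq> 0"
    using F10g F10 rates by auto
  have D2: "Pl * S1 + sk \<noteq> 0"
    using F20g F20 rates by auto
  have pos1: "0 < 1 + Pl * m * \<beta>t\<^sup>2 / (Pl * (m * \<beta>k\<^sup>2 + S1) + sk)"
    using Pl m0 sk by (intro add_pos_nonneg) (auto intro!: divide_nonneg_nonneg)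
  have pos2: "0 < 1 + Pl * m * \<beta>k\<^sup>2 / (Pl * S1 + sk)"
    using Pl m0 sk by (intro add_pos_nonneg) (auto intro!: divide_nonneg_nonneg)
  have L1: "(F1 \<longlongrightarrow> F1 0) (at 0)"
    unfolding F1_def
    apply (intro tendsto_intros Acont)
    using D1 pos1 by (simp_all add: A0 m_def S1_def)
  have L2: "(F2 \<longlongrightarrow> F2 0) (at 0)"
    unfolding F2_def
    apply (intro tendsto_intros Acont)
    using D2 pos2 by (simp_all add: A0 m_def S1_def)
  have ev: "eventually (\<lambda>Ew. F1 Ew > Rt_rate \<and> F2 Ew > Rk) (at (0::complex^'m^'n))"
    using order_tendstoD(1)[OF L1 F10g] order_tendstoD(1)[OF L2 F20g] by (rule eventually_conj)
  then obtain \<delta> where d: "\<delta> > 0" and dP: "\<And>Ew. Ew \<noteq> 0 \<Longrightarrow> dist Ew 0 < \<delta> \<Longrightarrow> F1 Ew > Rt_rate \<and> F2 Ew > Rk"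
    unfolding eventually_at by blast
  have sub: "S \<subseteq> {Ew. \<delta> \<le> norm Ew}"
  proof
    fix Ew assume "Ew \<in> S"
    then have "F1 Ew < Rt_rate \<or> F2 Ew < Rk" by (simp add: S_eq)
    show "Ew \<in> {Ew. \<delta> \<le> norm Ew}"
    proof (rule ccontr)
      assume "Ew \<notin> {Ew. \<delta> \<le> norm Ew}"
      then have "dist Ew 0 < \<delta>" by (simp add: dist_norm)
      then show False
        using dP[of Ew] F10g F20g \<open>F1 Ew < Rt_rate \<or> F2 Ew < Rk\<close> by (cases "Ew = 0") auto
    qed
  qed
  let ?D = "CARD('n) * CARD('m)"
  have bound: "measure (cgauss_mat s :: (complex^'m^'n) measure) S \<le> 2 ^ ?D * exp (- \<delta>\<^sup>2 / (2 * s))" if s: "s > 0" for s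
  proof -
    have B: "{Ew::complex^'m^'n. \<delta> \<le> norm Ew} \<in> sets (cgauss_mat s :: (complex^'m^'n) measure)"
      unfolding cgauss_mat_def by simp measurable
    have "emeasure (cgauss_mat s :: (complex^'m^'n) measure) S \<le> emeasure (cgauss_mat s :: (complex^'m^'n) measure) {Ew. \<delta> \<le> norm Ew}"
      by (rule emeasure_mono[OF sub B])
    also have "\<dots> \<le> ennreal (2 ^ ?D * exp (- \<delta>\<^sup>2 / (2 * s)))"
      by (rule gauss_tail[OF d s])
    finally have "emeasure (cgauss_mat s :: (complex^'m^'n) measure) S \<le> ennreal (2 ^ ?D * exp (- \<delta>\<^sup>2 / (2 * s)))" .
    then show ?thesis unfolding measure_def
      by (metis enn2real_ennreal enn2real_mono ennreal_less_top exp_ge_zero mult_nonneg_nonneg zero_le_numeral zero_le_power)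
  qed
  have lim: "((\<lambda>s. 2 ^ ?D * exp (- \<delta>\<^sup>2 / (2 * s))) \<longlongrightarrow> 0) (at_right (0::real))"
    by (rule exp_lim[OF d])
  have "((\<lambda>s. measure (cgauss_mat s :: (complex^'m^'n) measure) S) \<longlongrightarrow> 0) (at_right 0)"
  proof (rule tendsto_sandwich[OF _ _ tendsto_const lim])
    show "eventually (\<lambda>s. 0 \<le> measure (cgauss_mat s :: (complex^'m^'n) measure) S) (at_right 0)"
      by simp
    show "eventually (\<lambda>s. measure (cgauss_mat s :: (complex^'m^'n) measure) S \<le> 2 ^ ?D * exp (- \<delta>\<^sup>2 / (2 * s))) (at_right 0)"
      by (rule eventually_mono[OF eventually_at_right_less[of 0]]) (rule bound)
  qed
  then show ?thesis unfolding S_def .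
qed

end
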